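(* Let $T_1,T_2$ be rooted trees on leaf set $[n]$. The following three numbers are equal: (1) the dimension of the cone $K_{T_1}+K_{T_2}\subseteq\mathbb{R}^{\binom{[n]}{2}}$; (2) the rank of the graphic matroid of the clade graph $G_{T_1,T_2}$, i.e. its number of vertices minus its number of connected components; (3) the cardinality $|\mathrm{clade}(T_1)\cup\mathrm{clade}(T_2)|$.
   Context: A rooted tree on leaf set $[n]$ has leaves labeled bijectively by $[n]$ and internal vertices each with at least two children. A clade of $T$ is the set of leaves below an internal vertex; $\mathrm{clade}(T)$ is the set of clades (including $[n]$). For $S\subseteq[n]$, $c_T(S)$ denotes the smallest clade of $T$ containing $S$. The clade graph $G_{T_1,T_2}$ is the bipartite multigraph whose vertex set is the disjoint union of $\mathrm{clade}(T_1)$ and $\mathrm{clade}(T_2)$ and which has, for each pair $1\le i<j\le n$, an edge $e_{ij}$ joining $c_{T_1}(\{i,j\})$ to $c_{T_2}(\{i,j\})$. An ultrametric is $\delta\in\mathbb{R}^{\binom{[n]}{2}}$ with $\delta_{uv}\le\max\{\delta_{uw},\delta_{vw}\}$ for all distinct $u,v,w$. $K_T$ is the closed cone of ultrametrics with topology $T$: the set of $\delta$ such that there are real weights on the internal vertices of $T$, weakly increasing along every path toward the root, with $\delta_{uv}$ equal to the weight of the most recent common ancestor (internal vertex on the $u$–$v$ path closest to the root) of $u$ and $v$. $K_{T_1}+K_{T_2}$ is the Minkowski sum. *)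

theory Defs
  imports Complex_Main "HOL-Library.Function_Algebras"
begin

text \<open>A rooted tree on leaf set [n] (internal vertices with at
least two children) is represented by its set of clades: a laminar family of subsets of
[n], each of size at least 2, containing [n].  This is in bijection with such trees
(up to isomorphism fixing the leaf labels).\<close>

definition rooted_tree :: "nat \<Rightarrow> nat set set \<Rightarrow> bool" where
  "rooted_tree n H \<longleftrightarrow>
     {1..n} \<in> H \<and>
     (\<forall>C\<in>H. C \<subseteq> {1..n} \<and> 2 \<le> card C) \<and>
     (\<forall>C\<in>H. \<forall>D\<in>H. C \<subseteq> D \<or> D \<subseteq> C \<or> C \<inter> D = {})"

definition clade_of :: "nat set set \<Rightarrow> nat set \<Rightarrow> nat set" where
  "clade_of H S = (THE C. C \<in> H \<and> S \<subseteq> C \<and> (\<forall>D\<in>H. S \<subseteq> D \<longrightarrow> C \<subseteq> D))"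

definition pairs :: "nat \<Rightarrow> nat set set" where
  "pairs n = {P. P \<subseteq> {1..n} \<and> card P = 2}"

text \<open>Vectors of R^(binom [n] 2) are functions on 2-subsets vanishing outside pairs n.
K_T: weights w on internal vertices (= clades), weakly increasing towards the root
(= along inclusion), delta_{uv} = weight of the mrca of u,v, i.e. of the clade c_T({u,v}).\<close>
definition ultra_cone :: "nat \<Rightarrow> nat set set \<Rightarrow> (nat set \<Rightarrow> real) set" where
  "ultra_cone n H = {\<delta>. (\<forall>P. P \<notin> pairs n \<longrightarrow> \<delta> P = 0) \<and>
     (\<exists>w :: nat set \<Rightarrow> real.
        (\<forall>C\<in>H. \<forall>D\<in>H. C \<subseteq> D \<longrightarrow> w C \<le> w D) \<and>
        (\<forall>u\<in>{1..n}. \<forall>v\<in>{1..n}. u \<noteq> v \<longrightarrow> \<delta> {u, v} = w (clade_of H {u, v})))}"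

definition minkowski_sum :: "('a \<Rightarrow> real) set \<Rightarrow> ('a \<Rightarrow> real) set \<Rightarrow> ('a \<Rightarrow> real) set" where
  "minkowski_sum A B = {a + b | a b. a \<in> A \<and> b \<in> B}"

text \<open>Dimension of a cone (containing 0) = dimension of its linear span, in the real vector
space of real-valued functions with pointwise operations.\<close>
definition cone_dim :: "('a \<Rightarrow> real) set \<Rightarrow> nat" where
  "cone_dim K = vector_space.dim (\<lambda>(c::real) f x. c * f x) K"

definition clade_graph_vertices :: "nat set set \<Rightarrow> nat set set \<Rightarrow> (nat set + nat set) set" where
  "clade_graph_vertices H1 H2 = Inl ` H1 \<union> Inr ` H2"

definition clade_graph_edges ::
  "nat \<Rightarrow> nat set set \<Rightarrow> nat set set \<Rightarrow> ((nat set + nat set) \<times> (nat set + nat set)) set" where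
  "clade_graph_edges n H1 H2 =
     {(Inl (clade_of H1 {i, j}), Inr (clade_of H2 {i, j})) | i j. 1 \<le> i \<and> i < j \<and> j \<le> n}"

definition num_components :: "'v set \<Rightarrow> ('v \<times> 'v) set \<Rightarrow> nat" where
  "num_components V E = card (V // (E \<union> E\<inverse>)\<^sup>*)"

definition graphic_rank :: "'v set \<Rightarrow> ('v \<times> 'v) set \<Rightarrow> nat" where
  "graphic_rank V E = card V - num_components V E"

end

theory Submission
  imports Defs
begin

lemma sum_fun_apply: "(sum f A) x = sum (\<lambda>a. f a x) A"
  by (induction A rule: infinite_finite_induct) auto

locale tree =
  fixes n :: nat and H :: "nat set set"
  assumes rt: "rooted_tree n H"
begin

lemma top: "{1..n} \<in> H" using rt unfolding rooted_tree_def by blast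
lemma sub: "C \<in> H \<Longrightarrow> C \<subseteq> {1..n}" using rt unfolding rooted_tree_def by blast
lemma card2: "C \<in> H \<Longrightarrow> 2 \<le> card C" using rt unfolding rooted_tree_def by blast
lemma lam: "C \<in> H \<Longrightarrow> D \<in> H \<Longrightarrow> C \<subseteq> D \<or> D \<subseteq> C \<or> C \<inter> D = {}"
  using rt unfolding rooted_tree_def by blast
lemma lam2: "C \<in> H \<Longrightarrow> D \<in> H \<Longrightarrow> x \<in> C \<Longrightarrow> x \<in> D \<Longrightarrow> C \<subseteq> D \<or> D \<subseteq> C"
  using lam by blast
lemma finH: "finite H"
  by (rule finite_subset[of H "Pow {1..n}"]) (use sub in blast, simp)
lemma finC: "C \<in> H \<Longrightarrow> finite C"
  by (meson sub finite_atLeastAtMost finite_subset)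

lemma clade_ex:
  assumes "S \<noteq> {}" "S \<subseteq> {1..n}"
  shows "\<exists>C. C \<in> H \<and> S \<subseteq> C \<and> (\<forall>D\<in>H. S \<subseteq> D \<longrightarrow> C \<subseteq> D)"
proof -
  let ?M = "{D\<in>H. S \<subseteq> D}"
  have fin: "finite ?M" using finH by auto
  have ne: "?M \<noteq> {}" using top assms by auto
  have "Min (card ` ?M) \<in> card ` ?M" using Min_in[of "card ` ?M"] fin ne by auto
  then obtain C where C: "C \<in> ?M" "card C = Min (card ` ?M)" by auto
  have "\<forall>D\<in>H. S \<subseteq> D \<longrightarrow> C \<subseteq> D"
  proof (intro ballI impI)
    fix D assume D: "D \<in> H" "S \<subseteq> D"
    obtain x where "x \<in> S" using assms by auto
    then have "C \<subseteq> D \<or> D \<subseteq> C" using lam2[of C D x] C D by auto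
    moreover have "card C \<le> card D" using C D fin by auto
    moreover have "finite C" using C finC by auto
    moreover have "D \<subseteq> C \<Longrightarrow> D = C" using card_seteq[of C D] \<open>finite C\<close> \<open>card C \<le> card D\<close> by blast
    ultimately show "C \<subseteq> D" by blast
  qed
  then show ?thesis using C by auto
qed

lemma clade_of:
  assumes "S \<noteq> {}" "S \<subseteq> {1..n}"
  shows "clade_of H S \<in> H" "S \<subseteq> clade_of H S" "\<And>D. D \<in> H \<Longrightarrow> S \<subseteq> D \<Longrightarrow> clade_of H S \<subseteq> D"
proof -
  obtain C where C: "C \<in> H \<and> S \<subseteq> C \<and> (\<forall>D\<in>H. S \<subseteq> D \<longrightarrow> C \<subseteq> D)"
    using clade_ex[OF assms] by blast
  have "clade_of H S = C" unfolding clade_of_def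
    by (rule the_equality) (use C in blast)+
  then show "clade_of H S \<in> H" "S \<subseteq> clade_of H S" "\<And>D. D \<in> H \<Longrightarrow> S \<subseteq> D \<Longrightarrow> clade_of H S \<subseteq> D"
    using C by auto
qed

lemma cp:
  assumes "i \<in> {1..n}" "j \<in> {1..n}"
  shows "clade_of H {i,j} \<in> H" "i \<in> clade_of H {i,j}" "j \<in> clade_of H {i,j}"
    "\<And>D. D \<in> H \<Longrightarrow> i \<in> D \<Longrightarrow> j \<in> D \<Longrightarrow> clade_of H {i,j} \<subseteq> D"
  using clade_of[of "{i,j}"] assms by auto

lemma cp_sub: "i \<in> {1..n} \<Longrightarrow> j \<in> {1..n} \<Longrightarrow> clade_of H {i,j} \<subseteq> {1..n}"
  by (meson cp(1) sub)

lemma three: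
  assumes ij: "i \<in> {1..n}" "j \<in> {1..n}" and k: "k \<in> clade_of H {i,j}" "k \<noteq> i" "k \<noteq> j"
  shows "\<exists>l\<in>{i,j}. clade_of H {l,k} = clade_of H {i,j}"
proof (rule ccontr)
  let ?X = "clade_of H {i,j}"
  assume nc: "\<not> ?thesis"
  have kn: "k \<in> {1..n}" using k cp_sub ij by blast
  have A: "clade_of H {i,k} \<subseteq> ?X" "clade_of H {j,k} \<subseteq> ?X"
    using cp[OF ij] cp[OF ij(1) kn] cp[OF ij(2) kn] k by auto
  have "clade_of H {i,k} \<subseteq> clade_of H {j,k} \<or> clade_of H {j,k} \<subseteq> clade_of H {i,k}"
    using lam2[of "clade_of H {i,k}" "clade_of H {j,k}" k] cp[OF ij(1) kn] cp[OF ij(2) kn] by auto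
  then have "?X \<subseteq> clade_of H {i,k} \<or> ?X \<subseteq> clade_of H {j,k}"
    using cp[OF ij] cp[OF ij(1) kn] cp[OF ij(2) kn] by blast
  then have "clade_of H {i,k} = ?X \<or> clade_of H {j,k} = ?X" using A by blast
  then show False using nc by blast
qed

lemma witness:
  assumes C: "C \<in> H" and i: "i \<in> C"
  shows "\<exists>j\<in>C. j \<noteq> i \<and> clade_of H {i,j} = C"
proof -
  let ?J = "C - {i}"
  have finJ: "finite ?J" using finC C by auto
  have "card ?J \<ge> 1" using card2[OF C] finC[OF C] i by auto
  then have neJ: "?J \<noteq> {}" by (metis card.empty not_one_le_zero)
  have Cn: "C \<subseteq> {1..n}" using sub C .
  obtain j where j: "j \<in> ?J" "card (clade_of H {i,j}) = Max ((\<lambda>j. card (clade_of H {i,j})) ` ?J)"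
    using Max_in[of "(\<lambda>j. card (clade_of H {i,j})) ` ?J"] finJ neJ by fastforce
  have jn: "i \<in> {1..n}" "j \<in> {1..n}" using i j Cn by auto
  have sub1: "clade_of H {i,j} \<subseteq> C" using cp(4)[OF jn C] i j by auto
  have "clade_of H {i,j} = C"
  proof (rule ccontr)
    assume "clade_of H {i,j} \<noteq> C"
    then obtain k where k: "k \<in> C" "k \<notin> clade_of H {i,j}" using sub1 by auto
    have kn: "k \<in> {1..n}" using k Cn by auto
    have ki: "k \<in> ?J" using k cp[OF jn] by auto
    have s2: "clade_of H {i,k} \<subseteq> C" using cp(4)[OF jn(1) kn C] i k by auto
    have "clade_of H {i,j} \<subseteq> clade_of H {i,k} \<or> clade_of H {i,k} \<subseteq> clade_of H {i,j}"
      using lam2[of "clade_of H {i,j}" "clade_of H {i,k}" i] cp[OF jn] cp[OF jn(1) kn] by auto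
    then have ps: "clade_of H {i,j} \<subset> clade_of H {i,k}"
      using cp[OF jn(1) kn] k by auto
    have "card (clade_of H {i,j}) < card (clade_of H {i,k})"
      by (rule psubset_card_mono[OF _ ps]) (use finC cp[OF jn(1) kn] in blast)
    moreover have "card (clade_of H {i,k}) \<le> card (clade_of H {i,j})"
      using j(2) finJ ki by auto
    ultimately show False by simp
  qed
  then show ?thesis using j by auto
qed

end

lemma ex_max_card:
  assumes "finite S" "S \<noteq> {}"
  shows "\<exists>x\<in>S. \<forall>y\<in>S. card y \<le> card x"
proof -
  have "Max (card ` S) \<in> card ` S" using Max_in assms by auto
  then obtain x where "x \<in> S" "card x = Max (card ` S)" by auto
  then show ?thesis using assms by (metis Max_ge finite_imageI imageI)
qed

definition vset :: "nat set + nat set \<Rightarrow> nat set" where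
  "vset v = (case v of Inl X \<Rightarrow> X | Inr X \<Rightarrow> X)"

lemma vset_simps[simp]: "vset (Inl X) = X" "vset (Inr X) = X"
  by (simp_all add: vset_def)

locale two = t1: tree n H1 + t2: tree n H2 for n H1 H2
begin

abbreviation "EE \<equiv> clade_graph_edges n H1 H2"
abbreviation "VV \<equiv> clade_graph_vertices H1 H2"
abbreviation "RR \<equiv> (EE \<union> EE\<inverse>)\<^sup>*"

lemma edge_iff: "(x,y) \<in> EE \<longleftrightarrow> (\<exists>i j. i \<in> {1..n} \<and> j \<in> {1..n} \<and> i \<noteq> j \<and>
   x = Inl (clade_of H1 {i,j}) \<and> y = Inr (clade_of H2 {i,j}))"
proof
  assume "(x,y) \<in> EE"
  then obtain i j where "x = Inl (clade_of H1 {i,j})" "y = Inr (clade_of H2 {i,j})" "1 \<le> i" "i < j" "j \<le> n"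
    unfolding clade_graph_edges_def by blast
  then show "\<exists>i j. i \<in> {1..n} \<and> j \<in> {1..n} \<and> i \<noteq> j \<and>
   x = Inl (clade_of H1 {i,j}) \<and> y = Inr (clade_of H2 {i,j})"
    by (intro exI[of _ i] exI[of _ j]) auto
next
  assume "\<exists>i j. i \<in> {1..n} \<and> j \<in> {1..n} \<and> i \<noteq> j \<and>
   x = Inl (clade_of H1 {i,j}) \<and> y = Inr (clade_of H2 {i,j})"
  then obtain i j where ij: "i \<in> {1..n}" "j \<in> {1..n}" "i \<noteq> j"
    "x = Inl (clade_of H1 {i,j})" "y = Inr (clade_of H2 {i,j})" by blast
  show "(x,y) \<in> EE"
  proof (cases "i < j")
    case True
    then show ?thesis using ij unfolding clade_graph_edges_def by auto
  next
    case False
    then have "j < i" using ij by auto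
    moreover have "{i,j} = {j,i}" by auto
    ultimately show ?thesis using ij unfolding clade_graph_edges_def by fastforce
  qed
qed

lemma edgeI: "i \<in> {1..n} \<Longrightarrow> j \<in> {1..n} \<Longrightarrow> i \<noteq> j \<Longrightarrow>
  (Inl (clade_of H1 {i,j}), Inr (clade_of H2 {i,j})) \<in> EE"
  using edge_iff by blast

lemma R_sym: "(x,y) \<in> RR \<Longrightarrow> (y,x) \<in> RR"
proof -
  have "sym (EE \<union> EE\<inverse>)" by (simp add: sym_Un_converse)
  then have "sym RR" by (rule sym_rtrancl)
  then show "(x,y) \<in> RR \<Longrightarrow> (y,x) \<in> RR" by (meson symD)
qed

lemma R_trans: "(x,y) \<in> RR \<Longrightarrow> (y,z) \<in> RR \<Longrightarrow> (x,z) \<in> RR"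
  by (rule rtrancl_trans)

lemma R_class: "(x,y) \<in> RR \<Longrightarrow> RR``{x} = RR``{y}"
  using R_sym R_trans by blast

lemma inv_sub:
  assumes A: "A \<in> H1" "A \<in> H2" and xy: "(x,y) \<in> RR" and x: "vset x \<subseteq> A"
  shows "vset y \<subseteq> A"
  using xy x
proof (induction rule: rtrancl_induct)
  case base
  then show ?case by simp
next
  case (step y z)
  from step(2) show ?case
  proof
    assume "(y,z) \<in> EE"
    then obtain i j where ij: "i \<in> {1..n}" "j \<in> {1..n}" "i \<noteq> j"
      "y = Inl (clade_of H1 {i,j})" "z = Inr (clade_of H2 {i,j})" using edge_iff by blast
    have "i \<in> A" "j \<in> A" using step(3,4) ij t1.cp[OF ij(1,2)] by auto
    then show ?case using t2.cp(4)[OF ij(1,2) A(2)] ij by simp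
  next
    assume "(y,z) \<in> EE\<inverse>"
    then have "(z,y) \<in> EE" by simp
    then obtain i j where ij: "i \<in> {1..n}" "j \<in> {1..n}" "i \<noteq> j"
      "z = Inl (clade_of H1 {i,j})" "y = Inr (clade_of H2 {i,j})" using edge_iff by blast
    have "i \<in> A" "j \<in> A" using step(3,4) ij t2.cp[OF ij(1,2)] by auto
    then show ?case using t1.cp(4)[OF ij(1,2) A(1)] ij by simp
  qed
qed

lemma inV:
  assumes xy: "(x,y) \<in> RR" and x: "x \<in> VV"
  shows "y \<in> VV"
  using xy x
proof (induction rule: rtrancl_induct)
  case base
  then show ?case by simp
next
  case (step y z)
  from step(2) show ?case
  proof
    assume "(y,z) \<in> EE"
    then obtain i j where ij: "i \<in> {1..n}" "j \<in> {1..n}" 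
      "z = Inr (clade_of H2 {i,j})" using edge_iff by blast
    then show ?case using t2.cp(1)[OF ij(1,2)] unfolding clade_graph_vertices_def by simp
  next
    assume "(y,z) \<in> EE\<inverse>"
    then have "(z,y) \<in> EE" by simp
    then obtain i j where ij: "i \<in> {1..n}" "j \<in> {1..n}" 
      "z = Inl (clade_of H1 {i,j})" using edge_iff by blast
    then show ?case using t1.cp(1)[OF ij(1,2)] unfolding clade_graph_vertices_def by simp
  qed
qed

lemma inV1: "Inl X \<in> VV \<Longrightarrow> X \<in> H1"
  unfolding clade_graph_vertices_def by auto
lemma inV2: "Inr X \<in> VV \<Longrightarrow> X \<in> H2"
  unfolding clade_graph_vertices_def by auto

lemma ne_clade: "C \<in> H \<Longrightarrow> tree n H \<Longrightarrow> \<exists>i. i \<in> C"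
  using tree.card2[of n H C] by (metis card.empty ex_in_conv not_numeral_le_zero)

lemma top_exists:
  assumes x: "x \<in> VV"
  shows "\<exists>A. A \<in> H1 \<and> A \<in> H2 \<and> (x, Inl A) \<in> RR \<and> (x, Inr A) \<in> RR"
proof -
  define L where "L = {X. (x, Inl X) \<in> RR}"
  have LH: "L \<subseteq> H1" using inV[OF _ x] inV1 unfolding L_def by blast
  have finL: "finite L" using finite_subset[OF LH t1.finH] .
  have neL: "L \<noteq> {}"
  proof (cases x)
    case (Inl X)
    then show ?thesis unfolding L_def by auto
  next
    case (Inr Y)
    then have Y: "Y \<in> H2" using x inV2 by simp
    obtain i where i: "i \<in> Y" using ne_clade[OF Y t2.tree_axioms] by blast
    obtain j where j: "j \<in> Y" "j \<noteq> i" "clade_of H2 {i,j} = Y" using t2.witness[OF Y i] by blast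
    have ijn: "i \<in> {1..n}" "j \<in> {1..n}" using i j t2.sub[OF Y] by auto
    have "(Inl (clade_of H1 {i,j}), Inr Y) \<in> EE" using edgeI[OF ijn] j by metis
    then have "(x, Inl (clade_of H1 {i,j})) \<in> RR" using Inr by blast
    then show ?thesis unfolding L_def by blast
  qed
  obtain Z where Z: "Z \<in> L" "\<And>Y. Y \<in> L \<Longrightarrow> card Y \<le> card Z"
    using ex_max_card[OF finL neL] by blast
  have ZH1: "Z \<in> H1" using Z LH by auto
  have xZ: "(x, Inl Z) \<in> RR" using Z unfolding L_def by simp
  have claim: "vset y \<subseteq> Z" if "(Inl Z, y) \<in> RR" for y
    using that
  proof (induction rule: rtrancl_induct)
    case base
    then show ?case by simp
  next
    case (step y z)
    have xz: "(x, z) \<in> RR" using xZ step(1,2) by (meson R_trans r_into_rtrancl)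
    from step(2) show ?case
    proof
      assume "(y,z) \<in> EE\<inverse>"
      then have "(z,y) \<in> EE" by simp
      then obtain i j where ij: "i \<in> {1..n}" "j \<in> {1..n}" "i \<noteq> j"
        "z = Inl (clade_of H1 {i,j})" "y = Inr (clade_of H2 {i,j})" using edge_iff by blast
      have "i \<in> Z" "j \<in> Z" using step(3) ij t2.cp[OF ij(1,2)] by auto
      then show ?case using t1.cp(4)[OF ij(1,2) ZH1] ij by simp
    next
      assume "(y,z) \<in> EE"
      then obtain i j where ij: "i \<in> {1..n}" "j \<in> {1..n}" "i \<noteq> j"
        "y = Inl (clade_of H1 {i,j})" "z = Inr (clade_of H2 {i,j})" using edge_iff by blast
      define W where "W = clade_of H2 {i,j}"
      have ijZ: "i \<in> Z" "j \<in> Z" using step(3) ij t1.cp[OF ij(1,2)] by auto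
      have "W \<subseteq> Z"
      proof (rule ccontr)
        assume "\<not> W \<subseteq> Z"
        then obtain k where k: "k \<in> W" "k \<notin> Z" by blast
        have kij: "k \<noteq> i" "k \<noteq> j" using k ijZ by auto
        have kn: "k \<in> {1..n}" using k t2.cp_sub[OF ij(1,2)] unfolding W_def by blast
        obtain l where l: "l \<in> {i,j}" "clade_of H2 {l,k} = W"
          using t2.three[OF ij(1,2) _ kij] k unfolding W_def by blast
        have ln: "l \<in> {1..n}" "l \<in> Z" "l \<noteq> k" using l ij ijZ kij by auto
        define X' where "X' = clade_of H1 {l,k}"
        have X': "X' \<in> H1" "l \<in> X'" "k \<in> X'" using t1.cp[OF ln(1) kn] unfolding X'_def by auto
        have "X' \<subseteq> Z \<or> Z \<subseteq> X'" using t1.lam2[OF X'(1) ZH1 X'(2) ln(2)] .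
        then have ps: "Z \<subset> X'" using k X' by auto
        have cZ: "card Z < card X'" using psubset_card_mono[OF t1.finC[OF X'(1)] ps] .
        have "(Inl X', Inr W) \<in> EE" using edgeI[OF ln(1) kn ln(3)] l unfolding X'_def by simp
        then have "(x, Inl X') \<in> RR" using xz ij(5) unfolding W_def
          by (meson R_trans UnI2 converseI r_into_rtrancl)
        then have "X' \<in> L" unfolding L_def by simp
        then show False using Z(2) cZ by fastforce
      qed
      then show ?case using ij(5) unfolding W_def by simp
    qed
  qed
  obtain i where i: "i \<in> Z" using ne_clade[OF ZH1 t1.tree_axioms] by blast
  obtain j where j: "j \<in> Z" "j \<noteq> i" "clade_of H1 {i,j} = Z" using t1.witness[OF ZH1 i] by blast
  define M where "M = {W. \<exists>a b. a \<in> {1..n} \<and> b \<in> {1..n} \<and> a \<noteq> b \<and> clade_of H1 {a,b} = Z \<and> W = clade_of H2 {a,b}}"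
  have MH: "M \<subseteq> H2" unfolding M_def using t2.cp(1) by blast
  have finM: "finite M" using finite_subset[OF MH t2.finH] .
  have neM: "M \<noteq> {}" unfolding M_def using i j t1.sub[OF ZH1] by blast
  obtain W where W: "W \<in> M" "\<And>Y. Y \<in> M \<Longrightarrow> card Y \<le> card W"
    using ex_max_card[OF finM neM] by blast
  obtain a b where ab: "a \<in> {1..n}" "b \<in> {1..n}" "a \<noteq> b" "clade_of H1 {a,b} = Z" "W = clade_of H2 {a,b}"
    using W(1) unfolding M_def by blast
  have WH2: "W \<in> H2" using W MH by auto
  have abW: "a \<in> W" "b \<in> W" using t2.cp[OF ab(1,2)] ab by auto
  have "Z \<subseteq> W"
  proof (rule ccontr)
    assume "\<not> Z \<subseteq> W"
    then obtain k where k: "k \<in> Z" "k \<notin> W" by blast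
    have kab: "k \<noteq> a" "k \<noteq> b" using k abW by auto
    have kn: "k \<in> {1..n}" using k t1.sub[OF ZH1] by blast
    obtain l where l: "l \<in> {a,b}" "clade_of H1 {l,k} = Z"
      using t1.three[OF ab(1,2) _ kab] k ab(4) by blast
    have ln: "l \<in> {1..n}" "l \<in> W" "l \<noteq> k" using l ab abW kab by auto
    define W' where "W' = clade_of H2 {l,k}"
    have W': "W' \<in> H2" "l \<in> W'" "k \<in> W'" using t2.cp[OF ln(1) kn] unfolding W'_def by auto
    have "W' \<in> M" unfolding M_def W'_def using ln kn l(2) by blast
    have "W' \<subseteq> W \<or> W \<subseteq> W'" using t2.lam2[OF W'(1) WH2 W'(2) ln(2)] .
    then have ps: "W \<subset> W'" using k W' by auto
    have "card W < card W'" using psubset_card_mono[OF t2.finC[OF W'(1)] ps] .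
    then show False using W(2) \<open>W' \<in> M\<close> by fastforce
  qed
  have "(Inl Z, Inr W) \<in> EE" using edgeI[OF ab(1-3)] ab by simp
  then have ZW: "(Inl Z, Inr W) \<in> RR" by blast
  then have "W \<subseteq> Z" using claim by fastforce
  then have "W = Z" using \<open>Z \<subseteq> W\<close> by blast
  then show ?thesis using ZH1 WH2 xZ ZW R_trans by metis
qed

lemma num_comp: "num_components VV EE = card (H1 \<inter> H2)"
proof -
  have "bij_betw (\<lambda>A. RR``{Inl A}) (H1 \<inter> H2) (VV // RR)"
  proof (rule bij_betwI')
    fix A B assume A: "A \<in> H1 \<inter> H2" and B: "B \<in> H1 \<inter> H2"
    show "(RR``{Inl A} = RR``{Inl B}) = (A = B)"
    proof
      assume eq: "RR``{Inl A} = RR``{Inl B}"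
      have "(Inl A, Inl B) \<in> RR" using eq by blast
      then have 1: "B \<subseteq> A" using inv_sub[of A "Inl A" "Inl B"] A by simp
      have "(Inl B, Inl A) \<in> RR" using eq by blast
      then have "A \<subseteq> B" using inv_sub[of B "Inl B" "Inl A"] B by simp
      then show "A = B" using 1 by blast
    qed simp
  next
    fix A assume "A \<in> H1 \<inter> H2"
    then have "Inl A \<in> VV" unfolding clade_graph_vertices_def by auto
    then show "RR``{Inl A} \<in> VV // RR" unfolding quotient_def by blast
  next
    fix K assume "K \<in> VV // RR"
    then obtain x where x: "x \<in> VV" "K = RR``{x}" unfolding quotient_def by blast
    obtain A where "A \<in> H1" "A \<in> H2" "(x, Inl A) \<in> RR" using top_exists[OF x(1)] by blast
    then show "\<exists>A\<in>H1 \<inter> H2. K = RR``{Inl A}" using x R_class by blast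
  qed
  then show ?thesis unfolding num_components_def by (simp add: bij_betw_same_card)
qed

lemma rank: "graphic_rank VV EE = card (H1 \<union> H2)"
proof -
  have "card VV = card H1 + card H2"
    unfolding clade_graph_vertices_def
    by (subst card_Un_disjoint) (auto simp: t1.finH t2.finH card_image)
  moreover have "card H1 + card H2 = card (H1 \<union> H2) + card (H1 \<inter> H2)"
    using card_Un_Int[OF t1.finH t2.finH] .
  ultimately show ?thesis unfolding graphic_rank_def num_comp by simp
qed

end


interpretation fv: vector_space "\<lambda>(c::real) (f::nat set \<Rightarrow> real) x. c * f x"
  by unfold_locales (auto simp: algebra_simps fun_eq_iff plus_fun_def)

definition vecw :: "nat \<Rightarrow> nat set set \<Rightarrow> (nat set \<Rightarrow> real) \<Rightarrow> nat set \<Rightarrow> real" where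
  "vecw n H w = (\<lambda>P. if P \<in> pairs n then w (clade_of H P) else 0)"

definition ee :: "nat \<Rightarrow> nat set set \<Rightarrow> nat set \<Rightarrow> nat set \<Rightarrow> real" where
  "ee n H C = (\<lambda>P. if P \<in> pairs n \<and> clade_of H P = C then 1 else 0)"

lemma pairs_iff: "P \<in> pairs n \<longleftrightarrow> (\<exists>i j. i \<in> {1..n} \<and> j \<in> {1..n} \<and> i \<noteq> j \<and> P = {i,j})"
  unfolding pairs_def card_2_iff by blast

context tree begin

lemma cP: "P \<in> pairs n \<Longrightarrow> clade_of H P \<in> H"
  using pairs_iff cp(1) by metis

lemma cone_vec: "\<delta> \<in> ultra_cone n H \<Longrightarrow> \<exists>w. \<delta> = vecw n H w"
proof -
  assume "\<delta> \<in> ultra_cone n H"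
  then obtain w where z: "\<forall>P. P \<notin> pairs n \<longrightarrow> \<delta> P = 0" and
    w: "\<forall>u\<in>{1..n}. \<forall>v\<in>{1..n}. u \<noteq> v \<longrightarrow> \<delta> {u, v} = w (clade_of H {u, v})"
    unfolding ultra_cone_def by blast
  have "\<delta> = vecw n H w"
  proof
    fix P show "\<delta> P = vecw n H w P"
    proof (cases "P \<in> pairs n")
      case True
      then obtain i j where "i \<in> {1..n}" "j \<in> {1..n}" "i \<noteq> j" "P = {i,j}" using pairs_iff by blast
      then show ?thesis using w True unfolding vecw_def by simp
    next
      case False
      then show ?thesis using z unfolding vecw_def by simp
    qed
  qed
  then show ?thesis by blast
qed

lemma vec_cone: "(\<forall>C\<in>H. \<forall>D\<in>H. C \<subseteq> D \<longrightarrow> w C \<le> w D) \<Longrightarrow> vecw n H w \<in> ultra_cone n H"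
  unfolding ultra_cone_def
proof (intro CollectI conjI exI[of _ w])
  show "\<forall>P. P \<notin> pairs n \<longrightarrow> vecw n H w P = 0" unfolding vecw_def by simp
  show "\<forall>u\<in>{1..n}. \<forall>v\<in>{1..n}. u \<noteq> v \<longrightarrow> vecw n H w {u, v} = w (clade_of H {u, v})"
  proof (intro ballI impI)
    fix u v assume "u \<in> {1..n}" "v \<in> {1..n}" "u \<noteq> v"
    then have "{u,v} \<in> pairs n" unfolding pairs_iff by blast
    then show "vecw n H w {u, v} = w (clade_of H {u, v})" unfolding vecw_def by simp
  qed
qed

lemma vec_sum: "vecw n H w = (\<Sum>C\<in>H. (\<lambda>x. w C * ee n H C x))"
proof
  fix P
  show "vecw n H w P = (\<Sum>C\<in>H. (\<lambda>x. w C * ee n H C x)) P"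
  proof (cases "P \<in> pairs n")
    case True
    have "(\<Sum>C\<in>H. (\<lambda>x. w C * ee n H C x)) P = (\<Sum>C\<in>H. if clade_of H P = C then w C else 0)"
      unfolding sum_fun_apply ee_def using True by (intro sum.cong) auto
    also have "\<dots> = w (clade_of H P)" using cP[OF True] finH by simp
    finally show ?thesis unfolding vecw_def using True by simp
  next
    case False
    then show ?thesis unfolding vecw_def sum_fun_apply ee_def by simp
  qed
qed

lemma zero_cone: "0 \<in> ultra_cone n H"
proof -
  have "vecw n H (\<lambda>_. 0) = 0" unfolding vecw_def by (simp add: fun_eq_iff)
  then show ?thesis using vec_cone[of "\<lambda>_. 0"] by simp
qed

lemma ee_span: "C \<in> H \<Longrightarrow> ee n H C \<in> fv.span (ultra_cone n H)"
proof -
  assume C: "C \<in> H"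
  define w1 where "w1 = (\<lambda>D. if C \<subseteq> D then 1 else (0::real))"
  define w2 where "w2 = (\<lambda>D. if C \<subset> D then 1 else (0::real))"
  have "ee n H C = vecw n H w1 - vecw n H w2"
    unfolding ee_def vecw_def w1_def w2_def by (auto simp: fun_eq_iff)
  moreover have "vecw n H w1 \<in> ultra_cone n H" by (rule vec_cone) (auto simp: w1_def)
  moreover have "vecw n H w2 \<in> ultra_cone n H" by (rule vec_cone) (auto simp: w2_def)
  ultimately show ?thesis by (metis fv.span_base fv.span_diff)
qed

lemma cone_span: "\<delta> \<in> ultra_cone n H \<Longrightarrow> \<delta> \<in> fv.span (ee n H ` H)"
proof -
  assume "\<delta> \<in> ultra_cone n H"
  then obtain w where "\<delta> = vecw n H w" using cone_vec by blast
  then have "\<delta> = (\<Sum>C\<in>H. (\<lambda>x. w C * ee n H C x))" using vec_sum by simp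
  also have "\<dots> \<in> fv.span (ee n H ` H)"
    by (intro fv.span_sum fv.span_scale fv.span_base) auto
  finally show ?thesis .
qed

lemma ee_inj: "inj_on (ee n H) H"
proof
  fix C C' assume C: "C \<in> H" and C': "C' \<in> H" and eq: "ee n H C = ee n H C'"
  obtain i where i: "i \<in> C" using card2[OF C] by (metis card.empty ex_in_conv not_numeral_le_zero)
  obtain j where j: "j \<in> C" "j \<noteq> i" "clade_of H {i,j} = C" using witness[OF C i] by blast
  have "{i,j} \<in> pairs n" using pairs_iff i j sub[OF C] by blast
  then have "ee n H C {i,j} = 1" using j unfolding ee_def by simp
  then have "ee n H C' {i,j} = 1" using eq by simp
  then show "C = C'" using j unfolding ee_def by (simp split: if_splits)
qed

end



context two begin

lemma top_self:
  assumes A: "A \<in> H1" "A \<in> H2"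
  shows "(Inl A, Inr A) \<in> RR"
proof -
  have "Inl A \<in> VV" using A unfolding clade_graph_vertices_def by auto
  then obtain A' where A': "A' \<in> H1" "A' \<in> H2" "(Inl A, Inl A') \<in> RR" "(Inl A, Inr A') \<in> RR"
    using top_exists by blast
  have "A' \<subseteq> A" using inv_sub[OF A A'(3)] by simp
  moreover have "A \<subseteq> A'" using inv_sub[OF A'(1,2) R_sym[OF A'(3)]] by simp
  ultimately have "A' = A" by blast
  then show ?thesis using A'(4) by simp
qed

lemma IND:
  assumes eq: "(\<Sum>C\<in>H1. (\<lambda>x. a C * ee n H1 C x)) + (\<Sum>D\<in>H2-H1. (\<lambda>x. b D * ee n H2 D x)) = 0"
  shows "\<forall>C\<in>H1. a C = 0" "\<forall>D\<in>H2-H1. b D = 0"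
proof -
  define w2 where "w2 = (\<lambda>D. if D \<in> H1 then 0 else - b D)"
  have s2: "(\<Sum>D\<in>H2-H1. (\<lambda>x. b D * ee n H2 D x)) = (\<Sum>D\<in>H2. (\<lambda>x. (- w2 D) * ee n H2 D x))"
  proof (rule sum.mono_neutral_cong_left)
    show "finite H2" by (rule t2.finH)
    show "H2 - H1 \<subseteq> H2" by blast
    show "\<forall>i\<in>H2 - (H2 - H1). (\<lambda>x. - w2 i * ee n H2 i x) = 0" by (auto simp: w2_def fun_eq_iff)
    show "\<And>x. x \<in> H2 - H1 \<Longrightarrow> (\<lambda>xa. b x * ee n H2 x xa) = (\<lambda>xa. - w2 x * ee n H2 x xa)"
      by (auto simp: w2_def)
  qed
  have h: "vecw n H1 a + vecw n H2 (\<lambda>D. - w2 D) = 0"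
    using eq unfolding s2 t1.vec_sum t2.vec_sum .
  have pe: "a (clade_of H1 P) = w2 (clade_of H2 P)" if "P \<in> pairs n" for P
  proof -
    have "(vecw n H1 a + vecw n H2 (\<lambda>D. - w2 D)) P = 0" by (simp add: h)
    then show ?thesis using that unfolding vecw_def plus_fun_def by simp
  qed
  define om where "om v = (case v of Inl X \<Rightarrow> a X | Inr Y \<Rightarrow> w2 Y)" for v
  have om_edge: "om x = om y" if xy: "(x,y) \<in> EE" for x y
  proof -
    obtain i j where ij: "i \<in> {1..n}" "j \<in> {1..n}" "i \<noteq> j"
      "x = Inl (clade_of H1 {i,j})" "y = Inr (clade_of H2 {i,j})" using edge_iff[THEN iffD1, OF xy] by blast
    have "{i,j} \<in> pairs n" using ij pairs_iff by blast
    then show ?thesis using pe ij unfolding om_def by simp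
  qed
  have om_R: "om x = om y" if "(x,y) \<in> RR" for x y
    using that
  proof (induction rule: rtrancl_induct)
    case base then show ?case by simp
  next
    case (step y z)
    from step(2) have yz: "om y = om z"
    proof
      assume "(y,z) \<in> EE" then show "om y = om z" by (rule om_edge)
    next
      assume "(y,z) \<in> EE\<inverse>" then have "(z,y) \<in> EE" by simp
      from om_edge[OF this] show "om y = om z" by (rule sym)
    qed
    show ?case using step(3) yz by (rule trans)
  qed
  have om0: "om v = 0" if vV: "v \<in> VV" for v
  proof -
    obtain A where "A \<in> H1" "A \<in> H2" "(v, Inr A) \<in> RR" using top_exists[OF vV] by blast
    then have "om v = om (Inr A)" using om_R by blast
    then show ?thesis using \<open>A \<in> H1\<close> by (simp add: om_def w2_def)
  qed
  show "\<forall>C\<in>H1. a C = 0"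
  proof
    fix C assume "C \<in> H1"
    then have "Inl C \<in> VV" unfolding clade_graph_vertices_def by auto
    then have "om (Inl C) = 0" by (rule om0)
    then show "a C = 0" by (simp add: om_def)
  qed
  show "\<forall>D\<in>H2-H1. b D = 0"
  proof
    fix D assume D: "D \<in> H2 - H1"
    then have "Inr D \<in> VV" unfolding clade_graph_vertices_def by auto
    then have "om (Inr D) = 0" by (rule om0)
    then show "b D = 0" using D by (simp add: om_def w2_def)
  qed
qed

definition "BB = ee n H1 ` H1 \<union> ee n H2 ` (H2 - H1)"

lemma disj: "ee n H1 ` H1 \<inter> ee n H2 ` (H2 - H1) = {}"
proof (rule ccontr)
  assume "\<not> ?thesis"
  then obtain C D where C: "C \<in> H1" and D: "D \<in> H2" "D \<notin> H1" and eq: "ee n H1 C = ee n H2 D" by blast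
  have "C \<subseteq> D"
  proof
    fix i assume i: "i \<in> C"
    obtain j where j: "j \<in> C" "j \<noteq> i" "clade_of H1 {i,j} = C" using t1.witness[OF C i] by blast
    have P: "{i,j} \<in> pairs n" using pairs_iff i j t1.sub[OF C] by blast
    have "ee n H1 C {i,j} = 1" using P j unfolding ee_def by simp
    then have "ee n H2 D {i,j} = 1" using eq by simp
    then have "clade_of H2 {i,j} = D" unfolding ee_def by (simp split: if_splits)
    then show "i \<in> D" using t2.cp P pairs_iff j i t1.sub[OF C] by (metis insertI1 subsetD)
  qed
  moreover have "D \<subseteq> C"
  proof
    fix i assume i: "i \<in> D"
    obtain j where j: "j \<in> D" "j \<noteq> i" "clade_of H2 {i,j} = D" using t2.witness[OF D(1) i] by blast
    have P: "{i,j} \<in> pairs n" using pairs_iff i j t2.sub[OF D(1)] by blast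
    have "ee n H2 D {i,j} = 1" using P j unfolding ee_def by simp
    then have "ee n H1 C {i,j} = 1" using eq by simp
    then have "clade_of H1 {i,j} = C" unfolding ee_def by (simp split: if_splits)
    then show "i \<in> C" using t1.cp P pairs_iff j i t2.sub[OF D(1)] by (metis insertI1 subsetD)
  qed
  ultimately have "C = D" by (rule subset_antisym)
  then show False using C D by simp
qed

lemma finBB: "finite BB" unfolding BB_def using t1.finH t2.finH by simp

lemma cardBB: "card BB = card (H1 \<union> H2)"
proof -
  have "card BB = card (ee n H1 ` H1) + card (ee n H2 ` (H2 - H1))"
    unfolding BB_def using disj t1.finH t2.finH by (simp add: card_Un_disjoint)
  also have "\<dots> = card H1 + card (H2 - H1)"
    using t1.ee_inj t2.ee_inj inj_on_subset[OF t2.ee_inj, of "H2 - H1"] by (simp add: card_image)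
  also have "\<dots> = card (H1 \<union> H2)"
  proof -
    have "H1 \<union> H2 = H1 \<union> (H2 - H1)" by blast
    moreover have "card (H1 \<union> (H2 - H1)) = card H1 + card (H2 - H1)"
      by (rule card_Un_disjoint) (use t1.finH t2.finH in auto)
    ultimately show ?thesis by simp
  qed
  finally show ?thesis .
qed

lemma indepBB: "fv.independent BB"
proof (rule fv.independent_if_scalars_zero[OF finBB])
  fix f x
  assume eq: "(\<Sum>x\<in>BB. (\<lambda>xa. f x * x xa)) = 0" and x: "x \<in> BB"
  have "(\<Sum>x\<in>BB. (\<lambda>xa. f x * x xa)) =
     (\<Sum>x\<in>ee n H1 ` H1. (\<lambda>xa. f x * x xa)) + (\<Sum>x\<in>ee n H2 ` (H2 - H1). (\<lambda>xa. f x * x xa))"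
    unfolding BB_def using disj t1.finH t2.finH by (simp add: sum.union_disjoint)
  also have "\<dots> = (\<Sum>C\<in>H1. (\<lambda>xa. (f \<circ> ee n H1) C * ee n H1 C xa)) +
      (\<Sum>D\<in>H2-H1. (\<lambda>xa. (f \<circ> ee n H2) D * ee n H2 D xa))"
    using t1.ee_inj inj_on_subset[OF t2.ee_inj, of "H2 - H1"] by (simp add: sum.reindex)
  finally have z: "(\<Sum>C\<in>H1. (\<lambda>xa. (f \<circ> ee n H1) C * ee n H1 C xa)) +
      (\<Sum>D\<in>H2-H1. (\<lambda>xa. (f \<circ> ee n H2) D * ee n H2 D xa)) = 0" using eq by simp
  from IND[OF z] x show "f x = 0" unfolding BB_def by auto
qed

abbreviation "SS \<equiv> minkowski_sum (ultra_cone n H1) (ultra_cone n H2)"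

lemma span_SS: "fv.span SS = fv.span (ee n H1 ` H1 \<union> ee n H2 ` H2)"
proof (rule fv.span_eq[THEN iffD2], rule conjI)
  show "SS \<subseteq> fv.span (ee n H1 ` H1 \<union> ee n H2 ` H2)"
  proof
    fix d assume "d \<in> SS"
    then obtain p q where pq: "d = p + q" "p \<in> ultra_cone n H1" "q \<in> ultra_cone n H2"
      unfolding minkowski_sum_def by blast
    have "p \<in> fv.span (ee n H1 ` H1 \<union> ee n H2 ` H2)"
      using t1.cone_span[OF pq(2)] fv.span_mono[of "ee n H1 ` H1"] by blast
    moreover have "q \<in> fv.span (ee n H1 ` H1 \<union> ee n H2 ` H2)"
      using t2.cone_span[OF pq(3)] fv.span_mono[of "ee n H2 ` H2"] by blast
    ultimately show "d \<in> fv.span (ee n H1 ` H1 \<union> ee n H2 ` H2)" using pq(1) fv.span_add by blast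
  qed
  have K1: "ultra_cone n H1 \<subseteq> SS"
  proof
    fix d assume "d \<in> ultra_cone n H1"
    then show "d \<in> SS" unfolding minkowski_sum_def using t2.zero_cone
      by (intro CollectI exI[of _ d] exI[of _ 0]) simp
  qed
  have K2: "ultra_cone n H2 \<subseteq> SS"
  proof
    fix d assume "d \<in> ultra_cone n H2"
    then show "d \<in> SS" unfolding minkowski_sum_def using t1.zero_cone
      by (intro CollectI exI[of _ 0] exI[of _ d]) simp
  qed
  show "ee n H1 ` H1 \<union> ee n H2 ` H2 \<subseteq> fv.span SS"
    using t1.ee_span t2.ee_span fv.span_mono[OF K1] fv.span_mono[OF K2] by blast
qed

lemma e2_common:
  assumes A: "A \<in> H1" "A \<in> H2"
  shows "ee n H2 A \<in> fv.span BB"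
proof -
  define K where "K = RR``{Inl A}"
  define F1 where "F1 = {C\<in>H1. Inl C \<in> K}"
  define F2 where "F2 = {D\<in>H2. Inr D \<in> K}"
  define u where "u = (\<lambda>P. if P \<in> pairs n \<and> Inl (clade_of H1 P) \<in> K then 1 else (0::real))"
  have fin1: "finite F1" "finite F2" unfolding F1_def F2_def using t1.finH t2.finH by auto
  have u1: "u = (\<Sum>C\<in>F1. ee n H1 C)"
  proof
    fix P show "u P = (\<Sum>C\<in>F1. ee n H1 C) P"
    proof (cases "P \<in> pairs n")
      case True
      have "(\<Sum>C\<in>F1. ee n H1 C) P = (\<Sum>C\<in>F1. if clade_of H1 P = C then 1 else 0)"
        unfolding sum_fun_apply ee_def using True by simp
      also have "\<dots> = (if clade_of H1 P \<in> F1 then 1 else 0)" using fin1 by simp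
      finally show ?thesis unfolding u_def F1_def using True t1.cP[OF True] by simp
    next
      case False then show ?thesis unfolding u_def sum_fun_apply ee_def by simp
    qed
  qed
  have u2: "u = (\<Sum>D\<in>F2. ee n H2 D)"
  proof
    fix P show "u P = (\<Sum>D\<in>F2. ee n H2 D) P"
    proof (cases "P \<in> pairs n")
      case True
      obtain i j where ij: "i \<in> {1..n}" "j \<in> {1..n}" "i \<noteq> j" "P = {i,j}" using True pairs_iff by blast
      have "(Inl (clade_of H1 P), Inr (clade_of H2 P)) \<in> RR" using edgeI[OF ij(1-3)] ij(4) by blast
      then have iff: "Inl (clade_of H1 P) \<in> K \<longleftrightarrow> Inr (clade_of H2 P) \<in> K"
        unfolding K_def using R_class by blast
      have "(\<Sum>D\<in>F2. ee n H2 D) P = (\<Sum>D\<in>F2. if clade_of H2 P = D then 1 else 0)"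
        unfolding sum_fun_apply ee_def using True by simp
      also have "\<dots> = (if clade_of H2 P \<in> F2 then 1 else 0)" using fin1 by simp
      finally show ?thesis unfolding u_def F2_def using True t2.cP[OF True] iff by simp
    next
      case False then show ?thesis unfolding u_def sum_fun_apply ee_def by simp
    qed
  qed
  have AF2: "A \<in> F2" unfolding F2_def K_def using A top_self by blast
  have F2sub: "F2 - {A} \<subseteq> H2 - H1"
  proof
    fix D assume D: "D \<in> F2 - {A}"
    then have D2: "D \<in> H2" and DK: "(Inl A, Inr D) \<in> RR" unfolding F2_def K_def by auto
    show "D \<in> H2 - H1"
    proof (rule ccontr)
      assume "D \<notin> H2 - H1"
      then have D1: "D \<in> H1" using D2 by blast
      have "D \<subseteq> A" using inv_sub[OF A DK] by simp
      moreover have "A \<subseteq> D" using inv_sub[OF D1 D2 R_sym[OF DK]] by simp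
      ultimately show False using D by blast
    qed
  qed
  have "u = ee n H2 A + (\<Sum>D\<in>F2-{A}. ee n H2 D)"
    unfolding u2 using sum.remove[OF fin1(2) AF2] by simp
  then have eqA: "ee n H2 A = u - (\<Sum>D\<in>F2-{A}. ee n H2 D)" by (simp add: algebra_simps)
  have "u \<in> fv.span BB" unfolding u1 BB_def F1_def
    by (intro fv.span_sum fv.span_base) auto
  moreover have "(\<Sum>D\<in>F2-{A}. ee n H2 D) \<in> fv.span BB"
    unfolding BB_def using F2sub by (intro fv.span_sum fv.span_base) auto
  ultimately show ?thesis unfolding eqA by (rule fv.span_diff)
qed

lemma span_BB: "fv.span BB = fv.span SS"
  unfolding span_SS
proof (rule fv.span_eq[THEN iffD2], rule conjI)
  show "BB \<subseteq> fv.span (ee n H1 ` H1 \<union> ee n H2 ` H2)"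
    by (rule subset_trans[OF _ fv.span_superset]) (auto simp: BB_def)
  show "ee n H1 ` H1 \<union> ee n H2 ` H2 \<subseteq> fv.span BB"
  proof
    fix x assume "x \<in> ee n H1 ` H1 \<union> ee n H2 ` H2"
    then show "x \<in> fv.span BB"
    proof
      assume "x \<in> ee n H1 ` H1"
      then have "x \<in> BB" by (simp add: BB_def)
      then show ?thesis by (rule fv.span_base)
    next
      assume "x \<in> ee n H2 ` H2"
      then obtain D where D: "D \<in> H2" "x = ee n H2 D" by blast
      show ?thesis
      proof (cases "D \<in> H1")
        case True
        then show ?thesis using e2_common D by simp
      next
        case False
        then have "x \<in> BB" using D unfolding BB_def by blast
        then show ?thesis by (rule fv.span_base)
      qed
    qed
  qed
qed

lemma dimSS: "cone_dim SS = card (H1 \<union> H2)"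
proof -
  have "cone_dim SS = fv.dim SS" unfolding cone_dim_def ..
  also have "\<dots> = card BB" by (rule fv.dim_eq_card[OF span_BB indepBB])
  finally show ?thesis using cardBB by simp
qed

end

theorem proposition3p7:
  fixes n :: nat and H1 H2 :: "nat set set"
  assumes "rooted_tree n H1" and "rooted_tree n H2"
  shows "cone_dim (minkowski_sum (ultra_cone n H1) (ultra_cone n H2))
           = graphic_rank (clade_graph_vertices H1 H2) (clade_graph_edges n H1 H2)
       \<and> graphic_rank (clade_graph_vertices H1 H2) (clade_graph_edges n H1 H2)
           = card (H1 \<union> H2)"
proof -
  interpret two n H1 H2
    by (simp add: two_def tree_def assms)
  show ?thesis using dimSS rank by simp
qed

end
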